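(* Let $M$ be a compact manifold, $D\subset M$ open, $B\subset M$ open with $\overline B\subset D$, and let $h_1,h_2,\dots$ be maps each sending $\overline D$ into $D$ and being a contraction of rate $\beta<1$ on $\overline D$. Assume $B\subset\bigcup_{i=1}^\infty h_i(B)$. Then for every $x\in B$ there is a sequence $(i_j)_{j\ge1}$ of positive integers such that $x=\lim_{n\to\infty}h_{i_1}\circ\dots\circ h_{i_n}(y)$ for all $y\in B$. *)

theory Defs
  imports "HOL-Analysis.Analysis"
begin

fun comp_seq :: "(nat \<Rightarrow> 'a \<Rightarrow> 'a) \<Rightarrow> (nat \<Rightarrow> nat) \<Rightarrow> nat \<Rightarrow> 'a \<Rightarrow> 'a" where
  "comp_seq h s 0 = id"
| "comp_seq h s (Suc n) = comp_seq h s n \<circ> h (s (Suc n))"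

end

theory Submission
  imports Defs
begin

lemma comp_seq_contr:
  fixes h :: "nat \<Rightarrow> 'a::metric_space \<Rightarrow> 'a"
  assumes sub: "\<And>i. i \<ge> 1 \<Longrightarrow> h i ` C \<subseteq> C"
    and con: "\<And>i x y. i \<ge> 1 \<Longrightarrow> x \<in> C \<Longrightarrow> y \<in> C \<Longrightarrow> dist (h i x) (h i y) \<le> q * dist x y"
    and q: "q \<ge> 0" and s: "\<forall>j\<ge>1. s j \<ge> 1"
  shows "u \<in> C \<Longrightarrow> v \<in> C \<Longrightarrow> dist (comp_seq h s n u) (comp_seq h s n v) \<le> q ^ n * dist u v"
proof (induction n arbitrary: u v)
  case 0 then show ?case by simp
next
  case (Suc n)
  have s1: "s (Suc n) \<ge> 1" using s by auto
  have hu: "h (s (Suc n)) u \<in> C" "h (s (Suc n)) v \<in> C" using sub[OF s1] Suc.prems by auto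
  have "dist (comp_seq h s (Suc n) u) (comp_seq h s (Suc n) v)
      = dist (comp_seq h s n (h (s (Suc n)) u)) (comp_seq h s n (h (s (Suc n)) v))" by simp
  also have "\<dots> \<le> q ^ n * dist (h (s (Suc n)) u) (h (s (Suc n)) v)" using Suc.IH hu by blast
  also have "\<dots> \<le> q ^ n * (q * dist u v)"
    using con[OF s1 Suc.prems] q by (simp add: mult_left_mono)
  finally show ?case by (simp add: mult.assoc mult.commute mult.left_commute)
qed

theorem lemma3p7:
  fixes h :: "nat \<Rightarrow> 'a::metric_space \<Rightarrow> 'a"
    and D B :: "'a set" and \<beta> :: real
  assumes "compact (UNIV :: 'a set)"
    and "open D" and "open B" and "closure B \<subseteq> D"
    and "\<beta> < 1"
    and "\<And>i. i \<ge> 1 \<Longrightarrow> h i ` closure D \<subseteq> D"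
    and "\<And>i x y. i \<ge> 1 \<Longrightarrow> x \<in> closure D \<Longrightarrow> y \<in> closure D \<Longrightarrow>
           dist (h i x) (h i y) \<le> \<beta> * dist x y"
    and "B \<subseteq> (\<Union>i\<in>{1..}. h i ` B)"
  shows "\<forall>x\<in>B. \<exists>s :: nat \<Rightarrow> nat. (\<forall>j\<ge>1. s j \<ge> 1) \<and>
           (\<forall>y\<in>B. (\<lambda>n. comp_seq h s n y) \<longlonglongrightarrow> x)"
proof
  fix x assume xB: "x \<in> B"
  define q where "q = max \<beta> 0"
  have q0: "q \<ge> 0" and q1: "q < 1" using assms(5) by (auto simp: q_def)
  let ?C = "closure D"
  have sub: "\<And>i::nat. i \<ge> 1 \<Longrightarrow> h i ` ?C \<subseteq> ?C" using assms(6) closure_subset by blast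
  have con: "\<And>(i::nat) x y. i \<ge> 1 \<Longrightarrow> x \<in> ?C \<Longrightarrow> y \<in> ?C \<Longrightarrow> dist (h i x) (h i y) \<le> q * dist x y"
  proof -
    fix i :: nat and x y assume "i \<ge> 1" "x \<in> ?C" "y \<in> ?C"
    then have "dist (h i x) (h i y) \<le> \<beta> * dist x y" using assms(7) by blast
    also have "\<dots> \<le> q * dist x y" by (simp add: q_def mult_right_mono)
    finally show "dist (h i x) (h i y) \<le> q * dist x y" .
  qed
  have BC: "B \<subseteq> ?C" using assms(4) closure_subset by blast
  have "\<forall>z\<in>B. \<exists>(i::nat) w. i \<ge> 1 \<and> w \<in> B \<and> h i w = z" using assms(8) by fastforce
  then obtain g p where gp: "\<And>z. z \<in> B \<Longrightarrow> g z \<ge> 1 \<and> p z \<in> B \<and> h (g z) (p z) = z"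
    by metis
  define xs where "xs = rec_nat x (\<lambda>_ z. p z)"
  have xs0: "xs 0 = x" and xsS: "\<And>n. xs (Suc n) = p (xs n)" by (simp_all add: xs_def)
  have xsB: "xs n \<in> B" for n by (induction n) (use xB gp in \<open>auto simp: xs0 xsS\<close>)
  define s where "s j = (if j = 0 then 1 else g (xs (j - 1)))" for j
  have s1: "\<forall>j\<ge>1. s j \<ge> 1" using gp xsB by (auto simp: s_def)
  have cx: "comp_seq h s n (xs n) = x" for n
  proof (induction n)
    case 0 then show ?case by (simp add: xs0)
  next
    case (Suc n)
    have "h (s (Suc n)) (xs (Suc n)) = xs n" using gp[OF xsB[of n]] by (simp add: s_def xsS)
    then show ?case using Suc by simp
  qed
  have "bounded (UNIV :: 'a set)" using assms(1) compact_imp_bounded by blast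
  then obtain c e where ce: "\<And>y::'a. dist c y \<le> e" unfolding bounded_def by blast
  have K: "dist u v \<le> 2 * e" for u v :: 'a
    using dist_triangle[of u v c] ce[of u] ce[of v] by (simp add: dist_commute)
  show "\<exists>s :: nat \<Rightarrow> nat. (\<forall>j\<ge>1. s j \<ge> 1) \<and> (\<forall>y\<in>B. (\<lambda>n. comp_seq h s n y) \<longlonglongrightarrow> x)"
  proof (intro exI conjI ballI)
    show "\<forall>j\<ge>1. s j \<ge> 1" by (rule s1)
    fix y assume yB: "y \<in> B"
    have bd: "norm (dist (comp_seq h s n y) x) \<le> q ^ n * (2 * e)" for n
    proof -
      have "dist (comp_seq h s n y) x = dist (comp_seq h s n y) (comp_seq h s n (xs n))"
        by (simp add: cx)
      also have "\<dots> \<le> q ^ n * dist y (xs n)"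
        by (rule comp_seq_contr[of h "closure D" q s, OF sub con q0 s1]) (use yB xsB BC in auto)
      also have "\<dots> \<le> q ^ n * (2 * e)" using K q0 by (simp add: mult_left_mono)
      finally show ?thesis by simp
    qed
    have "(\<lambda>n. q ^ n * (2 * e)) \<longlonglongrightarrow> 0"
      by (rule tendsto_mult_left_zero, rule LIMSEQ_power_zero) (use q0 q1 in simp)
    then have "(\<lambda>n. dist (comp_seq h s n y) x) \<longlonglongrightarrow> 0"
      by (rule Lim_null_comparison[OF always_eventually, OF allI, OF bd])
    then show "(\<lambda>n. comp_seq h s n y) \<longlonglongrightarrow> x" by (rule tendsto_dist_iff[THEN iffD2])
  qed
qed

end
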